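(* Let $f:G\to H$, $f':G'\to H'$, $\varphi:G\to G'$, $\psi:H\to H'$ and $\xi:H'\to H$ be group homomorphisms such that $f'\circ\varphi=\psi\circ f$ and $\psi\circ\xi=\mathrm{id}_{H'}$. If $\xi$ is surjective or $f'$ does not admit a global section, then $\mathrm{sec}(f)\geq \mathrm{sec}(f')$. Moreover, if $\varphi$ is an isomorphism and $\xi$ is surjective, then $\mathrm{sec}(f)=\mathrm{sec}(f')$.
   Context: For a homomorphism $f:G\to H$ and a subgroup $L\le H$, a local section of $f$ on $L$ is a homomorphism $s:L\to G$ with $f\circ s=\mathrm{incl}_L$ (the inclusion $L\hookrightarrow H$); a global section is a local section on $L=H$. The sectional number $\mathrm{sec}(f)$ is the least positive integer $m$ such that there exist proper subgroups $H_1,\ldots,H_m$ of $H$ with $H=H_1\cup\cdots\cup H_m$ and such that $f$ admits a local section on each $H_i$; $\mathrm{sec}(f)=\infty$ if no such $m$ exists. *)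

theory Defs
  imports "HOL-Algebra.Algebra" "HOL-Library.Extended_Nat"
begin

definition local_section ::
  "('a, 'm) monoid_scheme \<Rightarrow> ('b, 'n) monoid_scheme \<Rightarrow> ('a \<Rightarrow> 'b) \<Rightarrow> 'b set \<Rightarrow> ('b \<Rightarrow> 'a) \<Rightarrow> bool"
where
  "local_section G H f L s \<longleftrightarrow>
     subgroup L H \<and> s \<in> hom (H\<lparr>carrier := L\<rparr>) G \<and> (\<forall>x\<in>L. f (s x) = x)"

definition has_local_section ::
  "('a, 'm) monoid_scheme \<Rightarrow> ('b, 'n) monoid_scheme \<Rightarrow> ('a \<Rightarrow> 'b) \<Rightarrow> 'b set \<Rightarrow> bool"
where
  "has_local_section G H f L \<longleftrightarrow> (\<exists>s. local_section G H f L s)"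

definition has_global_section ::
  "('a, 'm) monoid_scheme \<Rightarrow> ('b, 'n) monoid_scheme \<Rightarrow> ('a \<Rightarrow> 'b) \<Rightarrow> bool"
where
  "has_global_section G H f \<longleftrightarrow> has_local_section G H f (carrier H)"

definition sec_admissible ::
  "('a, 'm) monoid_scheme \<Rightarrow> ('b, 'n) monoid_scheme \<Rightarrow> ('a \<Rightarrow> 'b) \<Rightarrow> nat \<Rightarrow> bool"
where
  "sec_admissible G H f m \<longleftrightarrow> m \<ge> 1 \<and>
     (\<exists>Hs :: nat \<Rightarrow> 'b set.
        (\<forall>i<m. subgroup (Hs i) H \<and> Hs i \<noteq> carrier H \<and> has_local_section G H f (Hs i)) \<and>
        carrier H = (\<Union>i<m. Hs i))"

definition sectional_number ::
  "('a, 'm) monoid_scheme \<Rightarrow> ('b, 'n) monoid_scheme \<Rightarrow> ('a \<Rightarrow> 'b) \<Rightarrow> enat"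
where
  "sectional_number G H f =
     (if \<exists>m. sec_admissible G H f m then enat (LEAST m. sec_admissible G H f m) else \<infinity>)"

end

theory Submission
  imports Defs
begin

lemma transfer_adm:
  fixes G :: "('a, 'm1) monoid_scheme" and H :: "('b, 'm2) monoid_scheme"
    and G' :: "('c, 'm3) monoid_scheme" and H' :: "('d, 'm4) monoid_scheme"
    and f :: "'a \<Rightarrow> 'b" and f' :: "'c \<Rightarrow> 'd" and \<phi> :: "'a \<Rightarrow> 'c"
    and \<psi> :: "'b \<Rightarrow> 'd" and \<xi> :: "'d \<Rightarrow> 'b"
  assumes gG: "group G" and gH: "group H" and gG': "group G'" and gH': "group H'"
    and hphi: "\<phi> \<in> hom G G'" and hxi: "\<xi> \<in> hom H' H"
    and comm: "\<forall>x\<in>carrier G. f' (\<phi> x) = \<psi> (f x)"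
    and inv: "\<forall>y\<in>carrier H'. \<psi> (\<xi> y) = y"
    and cond: "\<xi> ` carrier H' = carrier H \<or> \<not> has_global_section G' H' f'"
    and adm: "sec_admissible G H f m"
  shows "sec_admissible G' H' f' m"
proof -
  obtain Hs where m1: "m \<ge> 1" and Hs: "\<forall>i<m. subgroup (Hs i) H \<and> Hs i \<noteq> carrier H \<and> has_local_section G H f (Hs i)"
    and cov: "carrier H = (\<Union>i<m. Hs i)"
    using adm unfolding sec_admissible_def by blast
  interpret xi: group_hom H' H \<xi> using gH' gH hxi by (simp add: group_hom_def group_hom_axioms_def)
  interpret phi: group_hom G G' \<phi> using gG gG' hphi by (simp add: group_hom_def group_hom_axioms_def)
  define Hs' where "Hs' i = {y \<in> carrier H'. \<xi> y \<in> Hs i}" for i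
  have sub: "subgroup (Hs' i) H'" if "i < m" for i
  proof -
    have S: "subgroup (Hs i) H" using Hs that by blast
    show ?thesis
    proof (rule group.subgroupI[OF gH'])
      show "Hs' i \<subseteq> carrier H'" unfolding Hs'_def by auto
      show "Hs' i \<noteq> {}" unfolding Hs'_def using S subgroup.one_closed by fastforce
      show "inv\<^bsub>H'\<^esub> a \<in> Hs' i" if "a \<in> Hs' i" for a
        using that S unfolding Hs'_def by (auto simp: subgroup.m_inv_closed)
      show "a \<otimes>\<^bsub>H'\<^esub> b \<in> Hs' i" if "a \<in> Hs' i" "b \<in> Hs' i" for a b
        using that S unfolding Hs'_def by (auto simp: subgroup.m_closed)
    qed
  qed
  have sec: "has_local_section G' H' f' (Hs' i)" if im: "i < m" for i
  proof -
    obtain s where s: "local_section G H f (Hs i) s"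
      using Hs im unfolding has_local_section_def by blast
    have shom: "s \<in> hom (H\<lparr>carrier := Hs i\<rparr>) G" and sf: "\<forall>x\<in>Hs i. f (s x) = x"
      using s unfolding local_section_def by auto
    have sc: "s x \<in> carrier G" if "x \<in> Hs i" for x
      using shom that unfolding hom_def by auto
    have sm: "s (x \<otimes>\<^bsub>H\<^esub> y) = s x \<otimes>\<^bsub>G\<^esub> s y" if "x \<in> Hs i" "y \<in> Hs i" for x y
      using shom that unfolding hom_def by auto
    define t where "t = (\<lambda>y. \<phi> (s (\<xi> y)))"
    have "local_section G' H' f' (Hs' i) t"
      unfolding local_section_def
    proof (intro conjI ballI)
      show "subgroup (Hs' i) H'" using sub that .
      show "t \<in> hom (H'\<lparr>carrier := Hs' i\<rparr>) G'"
      proof (rule homI)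
        fix x assume "x \<in> carrier (H'\<lparr>carrier := Hs' i\<rparr>)"
        then show "t x \<in> carrier G'" unfolding t_def Hs'_def using sc by auto
      next
        fix x y assume "x \<in> carrier (H'\<lparr>carrier := Hs' i\<rparr>)" "y \<in> carrier (H'\<lparr>carrier := Hs' i\<rparr>)"
        then show "t (x \<otimes>\<^bsub>H'\<lparr>carrier := Hs' i\<rparr>\<^esub> y) = t x \<otimes>\<^bsub>G'\<^esub> t y"
          unfolding t_def Hs'_def using sc sm by auto
      qed
      fix y assume y: "y \<in> Hs' i"
      then have "\<xi> y \<in> Hs i" "y \<in> carrier H'" unfolding Hs'_def by auto
      then show "f' (t y) = y" unfolding t_def using comm sc sf inv by auto
    qed
    then show ?thesis unfolding has_local_section_def by blast
  qed
  have proper: "Hs' i \<noteq> carrier H'" if "i < m" for i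
  proof
    assume eq: "Hs' i = carrier H'"
    from cond show False
    proof
      assume im: "\<xi> ` carrier H' = carrier H"
      have "carrier H \<subseteq> Hs i"
      proof
        fix x assume "x \<in> carrier H"
        then obtain y where "y \<in> carrier H'" "x = \<xi> y" using im by blast
        then show "x \<in> Hs i" using eq unfolding Hs'_def by blast
      qed
      moreover have "Hs i \<subseteq> carrier H" using Hs that subgroup.subset by blast
      ultimately show False using Hs that by blast
    next
      assume "\<not> has_global_section G' H' f'"
      then show False using sec[OF that] eq unfolding has_global_section_def by simp
    qed
  qed
  have "carrier H' = (\<Union>i<m. Hs' i)"
  proof
    show "carrier H' \<subseteq> (\<Union>i<m. Hs' i)"
    proof
      fix y assume y: "y \<in> carrier H'"
      then have "\<xi> y \<in> carrier H" by simp
      then obtain i where "i < m" "\<xi> y \<in> Hs i" using cov by blast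
      then show "y \<in> (\<Union>i<m. Hs' i)" using y unfolding Hs'_def by blast
    qed
    show "(\<Union>i<m. Hs' i) \<subseteq> carrier H'" unfolding Hs'_def by auto
  qed
  then show ?thesis unfolding sec_admissible_def using m1 sub sec proper by blast
qed

lemma sec_mono:
  assumes "\<And>m. sec_admissible G H f m \<Longrightarrow> sec_admissible G' H' f' m"
  shows "sectional_number G' H' f' \<le> sectional_number G H f"
proof (cases "\<exists>m. sec_admissible G H f m")
  case True
  then have a: "sec_admissible G H f (LEAST m. sec_admissible G H f m)" by (rule LeastI_ex)
  then have b: "sec_admissible G' H' f' (LEAST m. sec_admissible G H f m)" using assms by blast
  then have "(LEAST m. sec_admissible G' H' f' m) \<le> (LEAST m. sec_admissible G H f m)"
    by (rule Least_le)
  then show ?thesis using True b unfolding sectional_number_def by auto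
next
  case False
  then have "sectional_number G H f = \<infinity>" unfolding sectional_number_def by simp
  then show ?thesis by simp
qed

theorem proposition2p9:
  fixes G :: "('a, 'm1) monoid_scheme" and H :: "('b, 'm2) monoid_scheme"
    and G' :: "('c, 'm3) monoid_scheme" and H' :: "('d, 'm4) monoid_scheme"
    and f :: "'a \<Rightarrow> 'b" and f' :: "'c \<Rightarrow> 'd" and \<phi> :: "'a \<Rightarrow> 'c"
    and \<psi> :: "'b \<Rightarrow> 'd" and \<xi> :: "'d \<Rightarrow> 'b"
  assumes "group G" "group H" "group G'" "group H'"
    and "f \<in> hom G H" "f' \<in> hom G' H'" "\<phi> \<in> hom G G'" "\<psi> \<in> hom H H'" "\<xi> \<in> hom H' H"
    and "\<forall>x\<in>carrier G. f' (\<phi> x) = \<psi> (f x)"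
    and "\<forall>y\<in>carrier H'. \<psi> (\<xi> y) = y"
  shows "(\<xi> ` carrier H' = carrier H \<or> \<not> has_global_section G' H' f'
            \<longrightarrow> sectional_number G H f \<ge> sectional_number G' H' f')
       \<and> (\<phi> \<in> iso G G' \<and> \<xi> ` carrier H' = carrier H
            \<longrightarrow> sectional_number G H f = sectional_number G' H' f')"
proof (intro conjI impI)
  assume c: "\<xi> ` carrier H' = carrier H \<or> \<not> has_global_section G' H' f'"
  show "sectional_number G H f \<ge> sectional_number G' H' f'"
    by (rule sec_mono, rule transfer_adm[OF assms(1-4,7,9-11) c])
next
  assume c: "\<phi> \<in> iso G G' \<and> \<xi> ` carrier H' = carrier H"
  have le1: "sectional_number G' H' f' \<le> sectional_number G H f"
    by (rule sec_mono, rule transfer_adm[OF assms(1-4,7,9-11)], use c in blast)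
  define \<phi>' where "\<phi>' = inv_into (carrier G) \<phi>"
  have iso': "\<phi>' \<in> iso G' G" unfolding \<phi>'_def using group.iso_set_sym[OF assms(1)] c by blast
  then have hom': "\<phi>' \<in> hom G' G" by (simp add: iso_def)
  have bij: "bij_betw \<phi> (carrier G) (carrier G')" using c by (simp add: iso_def)
  have psixi: "\<forall>x\<in>carrier H. \<xi> (\<psi> x) = x"
  proof
    fix x assume "x \<in> carrier H"
    then obtain y where "y \<in> carrier H'" "x = \<xi> y" using c by blast
    then show "\<xi> (\<psi> x) = x" using assms(11) by simp
  qed
  have comm': "\<forall>z\<in>carrier G'. f (\<phi>' z) = \<xi> (f' z)"
  proof
    fix z assume z: "z \<in> carrier G'"
    have g: "\<phi>' z \<in> carrier G" "\<phi> (\<phi>' z) = z"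
      using z bij unfolding \<phi>'_def by (auto simp: bij_betw_def inv_into_into f_inv_into_f)
    have "f (\<phi>' z) \<in> carrier H" using g assms(5) by (simp add: hom_def Pi_def)
    then have "f (\<phi>' z) = \<xi> (\<psi> (f (\<phi>' z)))" using psixi by simp
    also have "\<psi> (f (\<phi>' z)) = f' z" using assms(10) g by metis
    finally show "f (\<phi>' z) = \<xi> (f' z)" .
  qed
  have surj: "\<psi> ` carrier H = carrier H'"
  proof
    show "\<psi> ` carrier H \<subseteq> carrier H'" using assms(8) by (auto simp: hom_def)
    show "carrier H' \<subseteq> \<psi> ` carrier H"
    proof
      fix y assume y: "y \<in> carrier H'"
      then have "\<xi> y \<in> carrier H" using assms(9) by (auto simp: hom_def)
      then show "y \<in> \<psi> ` carrier H" using y assms(11) by (metis image_eqI)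
    qed
  qed
  have le2: "sectional_number G H f \<le> sectional_number G' H' f'"
    by (rule sec_mono, rule transfer_adm[OF assms(3,4,1,2) hom' assms(8) comm' psixi], use surj in blast)
  show "sectional_number G H f = sectional_number G' H' f'" using le1 le2 by simp
qed

end
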